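(* Multi-winner approval voting (AV) is the only Thiele rule (for the fixed $m$ and $k$) that satisfies the excellence criterion.
   Context: Let $\mathcal C=\{c_1,\dots,c_m\}$ ($m\ge2$) be the candidates, $\mathcal A$ the set of non-empty subsets of $\mathcal C$ (ballots), and a profile a map $A:N_A\to\mathcal A$ from a non-empty finite set of voters $N_A\subseteq\mathbb N$. Fix $k\in\{1,\dots,m-1\}$, and let $\mathcal W_k$ be the set of $k$-element subsets of $\mathcal C$ (committees). An ABC voting rule maps each profile to a non-empty subset of $\mathcal W_k$. A Thiele rule is an ABC voting rule for which there is a non-decreasing $s:\{0,\dots,k\}\to\mathbb R$ with $s(0)=0$ such that $f(A)$ is the set of committees $W$ maximizing $\sum_{i\in N_A}s(|A_i\cap W|)$. AV is the Thiele rule with $s(x)=x$. A profile $A$ is a party-list profile if there is a partition $\mathcal P_A=\{P_1,\dots,P_\ell\}$ of $\mathcal C$ such that every voter's ballot equals some $P_j$; $n_j$ denotes the number of voters whose ballot is $P_j$. An ABC voting rule $f$ satisfies the excellence criterion if for all party-list profiles $A$, all $W\in f(A)$, and all parties $P_i,P_j\in\mathcal P_A$ with $n_i<n_j$, $P_i\subseteq W$ implies $P_j\subseteq W$. *)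

theory Defs
  imports Complex_Main "HOL-Library.Disjoint_Sets"
begin

text \<open>Non-participating voters are encoded by the empty set.\<close>

definition voters :: "(nat \<Rightarrow> 'a set) \<Rightarrow> nat set" where
  "voters A = {i. A i \<noteq> {}}"

definition is_profile :: "'a set \<Rightarrow> (nat \<Rightarrow> 'a set) \<Rightarrow> bool" where
  "is_profile C A \<longleftrightarrow> finite (voters A) \<and> voters A \<noteq> {} \<and> (\<forall>i. A i \<subseteq> C)"

definition committees :: "'a set \<Rightarrow> nat \<Rightarrow> 'a set set" where
  "committees C k = {W. W \<subseteq> C \<and> card W = k}"

definition is_abc_rule :: "'a set \<Rightarrow> nat \<Rightarrow> ((nat \<Rightarrow> 'a set) \<Rightarrow> 'a set set) \<Rightarrow> bool" where
  "is_abc_rule C k f \<longleftrightarrow>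
     (\<forall>A. is_profile C A \<longrightarrow> f A \<noteq> {} \<and> f A \<subseteq> committees C k)"

definition thiele_score :: "(nat \<Rightarrow> real) \<Rightarrow> (nat \<Rightarrow> 'a set) \<Rightarrow> 'a set \<Rightarrow> real" where
  "thiele_score s A W = (\<Sum>i\<in>voters A. s (card (A i \<inter> W)))"

definition thiele_outcome :: "'a set \<Rightarrow> nat \<Rightarrow> (nat \<Rightarrow> real) \<Rightarrow> (nat \<Rightarrow> 'a set) \<Rightarrow> 'a set set" where
  "thiele_outcome C k s A =
     {W \<in> committees C k. \<forall>W' \<in> committees C k. thiele_score s A W' \<le> thiele_score s A W}"

text \<open>Admissible Thiele scoring functions: s 0 = 0, non-decreasing on {0..k}
  (values above k are irrelevant since |A_i \<inter> W| \<le> k).\<close>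
definition thiele_rule :: "'a set \<Rightarrow> nat \<Rightarrow> ((nat \<Rightarrow> 'a set) \<Rightarrow> 'a set set) \<Rightarrow> bool" where
  "thiele_rule C k f \<longleftrightarrow> is_abc_rule C k f \<and>
     (\<exists>s :: nat \<Rightarrow> real. s 0 = 0 \<and> (\<forall>x y. x \<le> y \<longrightarrow> y \<le> k \<longrightarrow> s x \<le> s y) \<and>
        (\<forall>A. is_profile C A \<longrightarrow> f A = thiele_outcome C k s A))"

definition AV :: "'a set \<Rightarrow> nat \<Rightarrow> (nat \<Rightarrow> 'a set) \<Rightarrow> 'a set set" where
  "AV C k = thiele_outcome C k real"

definition party_list_with :: "'a set \<Rightarrow> (nat \<Rightarrow> 'a set) \<Rightarrow> 'a set set \<Rightarrow> bool" where
  "party_list_with C A P \<longleftrightarrow> is_profile C A \<and> partition_on C P \<and> (\<forall>i\<in>voters A. A i \<in> P)"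

definition party_support :: "(nat \<Rightarrow> 'a set) \<Rightarrow> 'a set \<Rightarrow> nat" where
  "party_support A Pj = card {i \<in> voters A. A i = Pj}"

definition excellence :: "'a set \<Rightarrow> ((nat \<Rightarrow> 'a set) \<Rightarrow> 'a set set) \<Rightarrow> bool" where
  "excellence C f \<longleftrightarrow>
     (\<forall>A P. party_list_with C A P \<longrightarrow>
        (\<forall>W \<in> f A. \<forall>Pi\<in>P. \<forall>Pj\<in>P.
           party_support A Pi < party_support A Pj \<longrightarrow> Pi \<subseteq> W \<longrightarrow> Pj \<subseteq> W))"

end

theory Submission
  imports Defs
begin


lemma score_parts:
  assumes "finite (voters A)" "finite Ps" "\<forall>i\<in>voters A. A i \<in> Ps"
  shows "thiele_score s A W = (\<Sum>P\<in>Ps. real (party_support A P) * s (card (P \<inter> W)))"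
proof -
  have "thiele_score s A W = (\<Sum>P\<in>Ps. \<Sum>i\<in>{i\<in>voters A. A i = P}. s (card (A i \<inter> W)))"
    unfolding thiele_score_def using assms
    by (intro sum.group[symmetric]) auto
  also have "\<dots> = (\<Sum>P\<in>Ps. \<Sum>i\<in>{i\<in>voters A. A i = P}. s (card (P \<inter> W)))"
    by (intro sum.cong) auto
  also have "\<dots> = (\<Sum>P\<in>Ps. real (party_support A P) * s (card (P \<inter> W)))"
    by (simp add: party_support_def)
  finally show ?thesis .
qed

lemma exists_profile:
  assumes "finite Ps" "{} \<notin> Ps"
  shows "\<exists>A. finite (voters A) \<and> (\<forall>i\<in>voters A. A i \<in> Ps) \<and> (\<forall>P\<in>Ps. party_support A P = g P)"
  using assms
proof (induction Ps rule: finite_induct)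
  case empty
  show ?case by (rule exI[of _ "\<lambda>_. {}"]) (simp add: voters_def)
next
  case (insert P Ps)
  then obtain A where A: "finite (voters A)" "\<forall>i\<in>voters A. A i \<in> Ps" "\<forall>Q\<in>Ps. party_support A Q = g Q"
    by auto
  from A(1) obtain N where N: "\<forall>i\<in>voters A. i < N"
    using finite_nat_set_iff_bounded by blast
  define A' where "A' = (\<lambda>i. if N \<le> i \<and> i < N + g P then P else A i)"
  have P0: "P \<noteq> {}" using insert by auto
  have v: "voters A' = voters A \<union> {N..<N + g P}"
    using N P0 unfolding voters_def A'_def by auto
  have "party_support A' P = g P"
  proof -
    have "{i \<in> voters A'. A' i = P} = {N..<N + g P}"
      using N A(2) insert(2) unfolding v by (auto simp: A'_def)
    thus ?thesis by (simp add: party_support_def)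
  qed
  moreover have "party_support A' Q = g Q" if "Q \<in> Ps" for Q
  proof -
    have "Q \<noteq> P" using that insert(2) by auto
    hence "{i \<in> voters A'. A' i = Q} = {i \<in> voters A. A i = Q}"
      using N unfolding v by (auto simp: A'_def)
    thus ?thesis using A(3) that by (simp add: party_support_def)
  qed
  moreover have "\<forall>i\<in>voters A'. A' i \<in> insert P Ps"
  proof
    fix i assume "i \<in> voters A'"
    hence "i \<in> voters A \<or> i \<in> {N..<N + g P}" unfolding v by blast
    thus "A' i \<in> insert P Ps"
    proof
      assume "i \<in> voters A" thus ?thesis using A(2) N by (simp add: A'_def)
    qed (simp add: A'_def)
  qed
  moreover have "finite (voters A')" unfolding v using A(1) by simp
  ultimately show ?case by (intro exI[of _ A']) auto
qed

lemma outcome_nonempty: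
  assumes "finite C" "k \<le> card C"
  shows "thiele_outcome C k s A \<noteq> {}"
proof -
  have fin: "finite (committees C k)" unfolding committees_def
    by (rule finite_subset[of _ "Pow C"]) (use assms(1) in auto)
  obtain W0 where "W0 \<subseteq> C" "card W0 = k" using obtain_subset_with_card_n[OF assms(2)] by metis
  hence ne: "committees C k \<noteq> {}" by (auto simp: committees_def)
  let ?M = "Max (thiele_score s A ` committees C k)"
  have "?M \<in> thiele_score s A ` committees C k" using fin ne by (intro Max_in) auto
  then obtain W where W: "W \<in> committees C k" "thiele_score s A W = ?M" by auto
  have "W \<in> thiele_outcome C k s A"
    unfolding thiele_outcome_def using W fin by auto
  thus ?thesis by auto
qed



lemma profile_exists:
  assumes "finite C" "X \<subseteq> C" "X \<noteq> {}" "S \<subseteq> C - X" "(a::nat) \<ge> 1"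
  shows "\<exists>A Ps. party_list_with C A Ps \<and> X \<in> Ps \<and> (\<forall>y\<in>S. {y} \<in> Ps) \<and>
     party_support A X = a \<and> (\<forall>y\<in>S. party_support A {y} = b) \<and>
     (\<forall>s W. s 0 = 0 \<longrightarrow> thiele_score s A W =
         real a * s (card (X \<inter> W)) + real b * s 1 * real (card (S \<inter> W)))"
proof -
  define Ps where "Ps = insert X ((\<lambda>c. {c}) ` (C - X))"
  define g where "g P = (if P = X then a else if P \<in> (\<lambda>c. {c}) ` S then b else 0)" for P
  have finPs: "finite Ps" using assms(1) by (simp add: Ps_def)
  have ne: "{} \<notin> Ps" using assms(3) by (auto simp: Ps_def)
  obtain A where A: "finite (voters A)" "\<forall>i\<in>voters A. A i \<in> Ps" "\<forall>P\<in>Ps. party_support A P = g P"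
    using exists_profile[OF finPs ne, of g] by blast
  have Xnot: "X \<notin> (\<lambda>c. {c}) ` (C - X)" by auto
  have suppX: "party_support A X = a" using A(3) by (simp add: Ps_def g_def)
  have suppS: "party_support A {y} = b" if "y \<in> S" for y
  proof -
    have "{y} \<noteq> X" using that assms(4) by auto
    moreover have "{y} \<in> Ps" using that assms(4) by (auto simp: Ps_def)
    ultimately show ?thesis using A(3) that by (simp add: g_def)
  qed
  have vne: "voters A \<noteq> {}"
  proof
    assume "voters A = {}"
    hence "party_support A X = 0" by (simp add: party_support_def)
    thus False using suppX assms(5) by simp
  qed
  have sub: "A i \<subseteq> C" for i
  proof (cases "i \<in> voters A")
    case True
    then show ?thesis using A(2) assms(2) by (auto simp: Ps_def)
  next
    case False
    then show ?thesis by (simp add: voters_def)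
  qed
  have part: "partition_on C Ps"
  proof -
    have "disjnt X (\<Union>((\<lambda>c. {c}) ` (C - X)))" by (auto simp: disjnt_def)
    moreover have "partition_on (C - X) ((\<lambda>c. {c}) ` (C - X))" by (rule partition_on_singletons)
    ultimately show ?thesis unfolding Ps_def using partition_on_insert assms(2,3) by blast
  qed
  have score: "thiele_score s A W =
         real a * s (card (X \<inter> W)) + real b * s 1 * real (card (S \<inter> W))" if s0: "s 0 = 0" for s W
  proof -
    have "thiele_score s A W = (\<Sum>P\<in>Ps. real (party_support A P) * s (card (P \<inter> W)))"
      by (rule score_parts[OF A(1) finPs A(2)])
    also have "\<dots> = real a * s (card (X \<inter> W)) +
        (\<Sum>P\<in>(\<lambda>c. {c}) ` (C - X). real (party_support A P) * s (card (P \<inter> W)))"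
      unfolding Ps_def using assms(1) Xnot suppX by (subst sum.insert) auto
    also have "(\<Sum>P\<in>(\<lambda>c. {c}) ` (C - X). real (party_support A P) * s (card (P \<inter> W)))
       = (\<Sum>c\<in>C - X. real (party_support A {c}) * s (card ({c} \<inter> W)))"
      by (subst sum.reindex) (auto simp: inj_on_def)
    also have "\<dots> = (\<Sum>c\<in>C - X. if c \<in> S \<inter> W then real b * s 1 else 0)"
    proof (intro sum.cong refl)
      fix c assume c: "c \<in> C - X"
      have "party_support A {c} = g {c}" using A(3) c by (auto simp: Ps_def)
      moreover have "{c} \<noteq> X" using c by auto
      ultimately have "party_support A {c} = (if c \<in> S then b else 0)"
        by (auto simp: g_def)
      thus "real (party_support A {c}) * s (card ({c} \<inter> W)) = (if c \<in> S \<inter> W then real b * s 1 else 0)"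
        using s0 by auto
    qed
    also have "\<dots> = (\<Sum>c\<in>(C - X) \<inter> (S \<inter> W). real b * s 1)"
      by (rule sum.inter_restrict[symmetric]) (use assms(1) in simp)
    also have "(C - X) \<inter> (S \<inter> W) = S \<inter> W" using assms(4) by auto
    finally show ?thesis by simp
  qed
  show ?thesis
    apply (rule exI[of _ A], rule exI[of _ Ps])
    using A(2) part sub vne A(1) suppX suppS score assms(4)
    by (auto simp: party_list_with_def is_profile_def Ps_def)
qed



lemma setup_sets:
  assumes "finite C" "1 \<le> j" "j \<le> k" "k < card C"
  obtains X S where "X \<subseteq> C" "S \<subseteq> C - X" "card X = j" "card S = Suc k - j"
proof -
  obtain T where T: "T \<subseteq> C" "card T = Suc k" using obtain_subset_with_card_n[of "Suc k" C] assms by auto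
  obtain X where X: "X \<subseteq> T" "card X = j" using obtain_subset_with_card_n[of j T] assms T by auto
  have "finite T" using T assms(1) finite_subset by blast
  hence "card (T - X) = Suc k - j" using X T by (simp add: card_Diff_subset finite_subset)
  thus ?thesis using that[of X "T - X"] X T by auto
qed

locale setting =
  fixes C :: "'a set" and k :: nat and s :: "nat \<Rightarrow> real"
  assumes fin: "finite C" and k1: "1 \<le> k" and kC: "k < card C"
    and s0: "s 0 = 0" and mono: "\<And>x y. x \<le> y \<Longrightarrow> y \<le> k \<Longrightarrow> s x \<le> s y"
    and exc: "\<And>A P W Pi Pj. party_list_with C A P \<Longrightarrow> W \<in> thiele_outcome C k s A \<Longrightarrow>
        Pi \<in> P \<Longrightarrow> Pj \<in> P \<Longrightarrow> party_support A Pi < party_support A Pj \<Longrightarrow> Pi \<subseteq> W \<Longrightarrow> Pj \<subseteq> W"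
begin

lemma card_facts:
  assumes "X \<subseteq> C" "S \<subseteq> C - X" "W \<in> committees C k"
  shows "card (X \<inter> W) \<le> card X" "card (S \<inter> W) \<le> card S" "card (X \<inter> W) + card (S \<inter> W) \<le> k"
proof -
  have fX: "finite X" "finite S" using assms fin finite_subset by blast+
  show "card (X \<inter> W) \<le> card X" "card (S \<inter> W) \<le> card S" using fX by (auto intro: card_mono)
  have fW: "finite W" using assms(3) fin finite_subset by (auto simp: committees_def)
  have "card (X \<inter> W) + card (S \<inter> W) = card ((X \<inter> W) \<union> (S \<inter> W))"
    using fX assms(2) by (subst card_Un_disjoint) auto
  also have "\<dots> \<le> card W" using fW by (intro card_mono) auto
  finally show "card (X \<inter> W) + card (S \<inter> W) \<le> k" using assms(3) by (simp add: committees_def)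
qed

lemma caseA:
  assumes j: "1 \<le> j" "j \<le> k" and ab: "b < a" "1 \<le> b"
    and ineq: "real b * s 1 > real a * (s j - s (j - 1))"
  shows False
proof -
  obtain X S where XS: "X \<subseteq> C" "S \<subseteq> C - X" "card X = j" "card S = Suc k - j"
    using setup_sets[OF fin j kC] by blast
  have fX: "finite X" "finite S" using XS fin finite_subset by blast+
  have Xne: "X \<noteq> {}" using XS j by auto
  obtain A Ps where AP: "party_list_with C A Ps" "X \<in> Ps" "\<forall>y\<in>S. {y} \<in> Ps"
     "party_support A X = a" "\<forall>y\<in>S. party_support A {y} = b"
     "\<forall>s W. s 0 = 0 \<longrightarrow> thiele_score s A W =
         real a * s (card (X \<inter> W)) + real b * s 1 * real (card (S \<inter> W))"
    using profile_exists[OF fin XS(1) Xne XS(2), of a b] ab by auto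
  have sc: "thiele_score s A W = real a * s (card (X \<inter> W)) + real b * s 1 * real (card (S \<inter> W))" for W
    using AP(6) s0 by blast
  obtain x0 where x0: "x0 \<in> X" using Xne by auto
  define W1 where "W1 = (X \<union> S) - {x0}"
  have cXS: "card (X \<union> S) = Suc k" using XS fX j by (subst card_Un_disjoint) auto
  have W1c: "W1 \<in> committees C k" using cXS XS x0 fX by (auto simp: W1_def committees_def)
  have "X \<inter> W1 = X - {x0}" "S \<inter> W1 = S" using XS x0 by (auto simp: W1_def)
  hence scW1: "thiele_score s A W1 = real a * s (j - 1) + real b * s 1 * real (Suc k - j)"
    using sc fX x0 XS by simp
  have dj: "s (j - 1) \<le> s j" using mono j by simp
  have s1pos: "s 1 > 0"
  proof -
    have "real a * (s j - s (j - 1)) \<ge> 0" using dj by simp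
    hence "real b * s 1 > 0" using ineq by linarith
    thus ?thesis using ab by (simp add: zero_less_mult_iff)
  qed
  obtain W where W: "W \<in> thiele_outcome C k s A"
    using outcome_nonempty[of C k s A] fin kC by auto
  hence Wc: "W \<in> committees C k" and Wge: "thiele_score s A W1 \<le> thiele_score s A W"
    using W1c by (auto simp: thiele_outcome_def)
  define p where "p = card (X \<inter> W)"
  define q where "q = card (S \<inter> W)"
  have pq: "p \<le> j" "q \<le> Suc k - j" "p + q \<le> k" using card_facts[OF XS(1,2) Wc] XS
    by (auto simp: p_def q_def)
  have scW: "thiele_score s A W = real a * s p + real b * s 1 * real q" using sc by (simp add: p_def q_def)
  have "p \<noteq> j"
  proof
    assume "p = j"
    hence "q \<le> k - j" using pq by simp
    hence "real b * s 1 * real q \<le> real b * s 1 * real (k - j)"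
      using s1pos by (intro mult_left_mono) auto
    moreover have "real (Suc k - j) = real (k - j) + 1" using j by simp
    ultimately have "thiele_score s A W < thiele_score s A W1"
    proof -
      assume h1: "real b * s 1 * real q \<le> real b * s 1 * real (k - j)"
        and h2: "real (Suc k - j) = real (k - j) + 1"
      have "thiele_score s A W1 = real a * s (j - 1) + real b * s 1 * real (k - j) + real b * s 1"
        using scW1 h2 by (simp add: distrib_left)
      moreover have "thiele_score s A W = real a * s j + real b * s 1 * real q"
        using scW \<open>p = j\<close> by simp
      moreover have "real a * s j - real a * s (j - 1) < real b * s 1"
        using ineq by (simp add: right_diff_distrib)
      ultimately show ?thesis using h1 by linarith
    qed
    thus False using Wge by simp
  qed
  hence pj: "p < j" using pq by simp
  have XnW: "\<not> X \<subseteq> W"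
  proof
    assume "X \<subseteq> W" hence "X \<inter> W = X" by auto
    thus False using pj XS by (simp add: p_def)
  qed
  have "q \<noteq> 0"
  proof
    assume "q = 0"
    have "s p \<le> s (j - 1)" using mono pj j by simp
    hence "real a * s p \<le> real a * s (j - 1)" by (intro mult_left_mono) auto
    moreover have "real b * s 1 * real (Suc k - j) > 0" using s1pos ab j by simp
    ultimately have "thiele_score s A W < thiele_score s A W1"
      using scW scW1 \<open>q = 0\<close> by (simp only: of_nat_0 mult_zero_right add_0_right)
    thus False using Wge by simp
  qed
  then obtain y where y: "y \<in> S" "y \<in> W" unfolding q_def using fX by (metis card.empty disjoint_iff)
  have "X \<subseteq> W"
    using exc[OF AP(1) W, of "{y}" X] AP y ab by auto
  thus False using XnW by simp
qed

lemma caseB: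
  assumes j: "1 \<le> j" "j \<le> k" and ab: "a < b" "1 \<le> a"
    and ineq: "real a * (s j - s (j - 1)) > real b * s 1"
  shows False
proof -
  obtain X S where XS: "X \<subseteq> C" "S \<subseteq> C - X" "card X = j" "card S = Suc k - j"
    using setup_sets[OF fin j kC] by blast
  have fX: "finite X" "finite S" using XS fin finite_subset by blast+
  have Xne: "X \<noteq> {}" using XS j by auto
  have Sne: "S \<noteq> {}" using XS j by auto
  obtain A Ps where AP: "party_list_with C A Ps" "X \<in> Ps" "\<forall>y\<in>S. {y} \<in> Ps"
     "party_support A X = a" "\<forall>y\<in>S. party_support A {y} = b"
     "\<forall>s W. s 0 = 0 \<longrightarrow> thiele_score s A W =
         real a * s (card (X \<inter> W)) + real b * s 1 * real (card (S \<inter> W))"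
    using profile_exists[OF fin XS(1) Xne XS(2), of a b] ab by auto
  have sc: "thiele_score s A W = real a * s (card (X \<inter> W)) + real b * s 1 * real (card (S \<inter> W))" for W
    using AP(6) s0 by blast
  obtain y0 where y0: "y0 \<in> S" using Sne by auto
  define W2 where "W2 = (X \<union> S) - {y0}"
  have cXS: "card (X \<union> S) = Suc k" using XS fX j by (subst card_Un_disjoint) auto
  have W2c: "W2 \<in> committees C k" using cXS XS y0 fX by (auto simp: W2_def committees_def)
  have "X \<inter> W2 = X" "S \<inter> W2 = S - {y0}" using XS y0 by (auto simp: W2_def)
  hence scW2: "thiele_score s A W2 = real a * s j + real b * s 1 * real (k - j)"
    using sc fX y0 XS by simp
  have s1nn: "s 1 \<ge> 0" using mono[of 0 1] k1 s0 by simp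
  obtain W where W: "W \<in> thiele_outcome C k s A"
    using outcome_nonempty[of C k s A] fin kC by auto
  hence Wc: "W \<in> committees C k" and Wge: "thiele_score s A W2 \<le> thiele_score s A W"
    using W2c by (auto simp: thiele_outcome_def)
  define p where "p = card (X \<inter> W)"
  define q where "q = card (S \<inter> W)"
  have pq: "p \<le> j" "q \<le> Suc k - j" "p + q \<le> k" using card_facts[OF XS(1,2) Wc] XS
    by (auto simp: p_def q_def)
  have scW: "thiele_score s A W = real a * s p + real b * s 1 * real q" using sc by (simp add: p_def q_def)
  have "\<not> p < j"
  proof
    assume pj: "p < j"
    have "s p \<le> s (j - 1)" using mono pj j by simp
    hence h1: "real a * s p \<le> real a * s (j - 1)" by (intro mult_left_mono) auto
    have h2: "real b * s 1 * real q \<le> real b * s 1 * real (k - j) + real b * s 1"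
    proof -
      have "real q \<le> real (k - j) + 1" using pq j by linarith
      hence "real b * s 1 * real q \<le> real b * s 1 * (real (k - j) + 1)"
        using s1nn by (intro mult_left_mono) auto
      thus ?thesis by (simp add: distrib_left)
    qed
    have h3: "real a * s j - real a * s (j - 1) > real b * s 1"
      using ineq by (simp add: right_diff_distrib)
    have "thiele_score s A W < thiele_score s A W2"
      using scW scW2 h1 h2 h3 by linarith
    thus False using Wge by simp
  qed
  hence "p = j" using pq by simp
  hence XW: "X \<subseteq> W" using XS fX unfolding p_def
    by (metis Int_lower1 card_subset_eq inf.absorb_iff1)
  have "q < card S" using pq \<open>p = j\<close> XS j by simp
  then obtain y where y: "y \<in> S" "y \<notin> W" unfolding q_def
    by (metis Int_absorb2 Int_commute nat_less_le subsetI)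
  have "{y} \<subseteq> W"
    using exc[OF AP(1) W, of X "{y}"] AP y ab XW by auto
  thus False using y by simp
qed

lemma case_zero:
  assumes z: "\<forall>i\<le>k. s i = 0"
  shows False
proof -
  obtain X S where XS: "X \<subseteq> C" "S \<subseteq> C - X" "card X = k" "card S = 1"
    using setup_sets[OF fin k1 order.refl kC] by auto
  have fX: "finite X" "finite S" using XS fin finite_subset by blast+
  have Xne: "X \<noteq> {}" using XS k1 by auto
  obtain y where Sy: "S = {y}" using XS(4) card_1_singletonE by blast
  obtain A Ps where AP: "party_list_with C A Ps" "X \<in> Ps" "\<forall>y\<in>S. {y} \<in> Ps"
     "party_support A X = 2" "\<forall>y\<in>S. party_support A {y} = 1"
     "\<forall>s W. s 0 = 0 \<longrightarrow> thiele_score s A W =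
         real 2 * s (card (X \<inter> W)) + real 1 * s 1 * real (card (S \<inter> W))"
    using profile_exists[OF fin XS(1) Xne XS(2), of 2 1] by auto
  obtain x0 where x0: "x0 \<in> X" using Xne by auto
  define W where "W = (X \<union> S) - {x0}"
  have cXS: "card (X \<union> S) = Suc k" using XS fX by (subst card_Un_disjoint) auto
  have Wc: "W \<in> committees C k" using cXS XS x0 fX by (auto simp: W_def committees_def)
  have zero: "thiele_score s A W' = 0" if "W' \<in> committees C k" for W'
  proof -
    have "card (X \<inter> W') \<le> k" using card_facts[OF XS(1,2) that] XS by simp
    thus ?thesis using AP(6) s0 z k1 by auto
  qed
  have "W \<in> thiele_outcome C k s A" using Wc zero by (auto simp: thiele_outcome_def)
  moreover have "{y} \<subseteq> W" using Sy XS x0 by (auto simp: W_def)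
  ultimately have "X \<subseteq> W" using exc[OF AP(1), of W "{y}" X] AP Sy by auto
  thus False using x0 by (auto simp: W_def)
qed

lemma diff_eq:
  assumes j: "1 \<le> j" "j \<le> k"
  shows "s j - s (j - 1) = s 1"
proof (rule ccontr)
  define d where "d = s j - s (j - 1)"
  assume "s j - s (j - 1) \<noteq> s 1"
  hence "d < s 1 \<or> d > s 1" by (auto simp: d_def)
  thus False
  proof
    assume lt: "d < s 1"
    obtain n :: nat where n: "real n > d / (s 1 - d)" using reals_Archimedean2 by blast
    define b where "b = Suc n"
    have "real b > d / (s 1 - d)" using n by (simp add: b_def)
    hence "real b * (s 1 - d) > d" using lt by (simp add: divide_less_eq)
    hence "real b * s 1 > real (Suc b) * d" by (simp add: algebra_simps)
    thus False using caseA[OF j, of b "Suc b"] by (simp add: d_def b_def)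
  next
    assume gt: "d > s 1"
    obtain n :: nat where n: "real n > s 1 / (d - s 1)" using reals_Archimedean2 by blast
    define a where "a = Suc n"
    have "real a > s 1 / (d - s 1)" using n by (simp add: a_def)
    hence "real a * (d - s 1) > s 1" using gt by (simp add: divide_less_eq)
    hence "real a * d > real (Suc a) * s 1" by (simp add: algebra_simps)
    thus False using caseB[OF j, of a "Suc a"] by (simp add: d_def a_def)
  qed
qed

lemma linear: "j \<le> k \<Longrightarrow> s j = real j * s 1"
proof (induction j)
  case 0 then show ?case using s0 by simp
next
  case (Suc j)
  then show ?case using diff_eq[of "Suc j"] by (simp add: algebra_simps)
qed

lemma s1_pos: "s 1 > 0"
proof (rule ccontr)
  assume "\<not> s 1 > 0"
  moreover have "s 1 \<ge> 0" using mono[of 0 1] k1 s0 by simp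
  ultimately have "s 1 = 0" by simp
  hence "\<forall>i\<le>k. s i = 0" using linear by simp
  thus False using case_zero by simp
qed

end


lemma card_change:
  assumes "finite W" "c \<notin> W" "c' \<in> W" "c \<in> Qj" "c' \<in> Qi" "Qi \<noteq> Qj"
    and "P \<in> Ps" "Qi \<in> Ps" "Qj \<in> Ps" "disjoint Ps"
  shows "real (card (P \<inter> insert c (W - {c'}))) =
     real (card (P \<inter> W)) + (if P = Qj then 1 else 0) - (if P = Qi then 1 else 0)"
proof -
  have cP: "c \<in> P \<longleftrightarrow> P = Qj" using assms(4,7,9,10)
    by (auto simp: pairwise_def disjnt_def)
  have cP': "c' \<in> P \<longleftrightarrow> P = Qi" using assms(5,7,8,10)
    by (auto simp: pairwise_def disjnt_def)
  have cc: "c \<noteq> c'" using assms(2,3) by auto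
  have fPW: "finite (P \<inter> W)" using assms(1) by simp
  show ?thesis
  proof (cases "P = Qj")
    case True
    hence "P \<inter> insert c (W - {c'}) = insert c (P \<inter> W)" using cP cP' assms(6) cc by auto
    thus ?thesis using True assms fPW by simp
  next
    case False
    note F = False
    show ?thesis
    proof (cases "P = Qi")
      case True
      hence "P \<inter> insert c (W - {c'}) = (P \<inter> W) - {c'}" using cP cP' F by auto
      moreover have "card ((P \<inter> W) - {c'}) = card (P \<inter> W) - 1" using fPW True assms by simp
      moreover have "card (P \<inter> W) \<ge> 1" using fPW True assms
        by (metis IntI card_0_eq empty_iff less_one not_le)
      ultimately show ?thesis using True F by (simp add: of_nat_diff)
    next
      case False
      hence "P \<inter> insert c (W - {c'}) = P \<inter> W" using cP cP' F by auto
      thus ?thesis using F False by simp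
    qed
  qed
qed

lemma AV_excellence:
  assumes fin: "finite C"
  shows "excellence C (AV C k)"
  unfolding excellence_def
proof (intro allI impI ballI)
  fix A Ps W Qi Qj
  assume pl: "party_list_with C A Ps" and W: "W \<in> AV C k A" and Qi: "Qi \<in> Ps" and Qj: "Qj \<in> Ps"
    and lt: "party_support A Qi < party_support A Qj" and sub: "Qi \<subseteq> W"
  show "Qj \<subseteq> W"
  proof (rule ccontr)
    assume "\<not> Qj \<subseteq> W"
    then obtain c where c: "c \<in> Qj" "c \<notin> W" by auto
    have part: "partition_on C Ps" and prof: "is_profile C A" and bal: "\<forall>i\<in>voters A. A i \<in> Ps"
      using pl by (auto simp: party_list_with_def)
    have neq: "Qi \<noteq> Qj" using lt by auto
    have "Qi \<noteq> {}" using part Qi by (auto simp: partition_on_def)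
    then obtain c' where c': "c' \<in> Qi" by auto
    have c'W: "c' \<in> W" using c' sub by auto
    have Wc: "W \<in> committees C k" and Wmax: "\<forall>W'\<in>committees C k. thiele_score real A W' \<le> thiele_score real A W"
      using W by (auto simp: AV_def thiele_outcome_def)
    have fW: "finite W" using Wc fin finite_subset by (auto simp: committees_def)
    define W' where "W' = insert c (W - {c'})"
    have cC: "c \<in> C" using c Qj part by (auto simp: partition_on_def)
    have "card W \<ge> 1" using fW c'W by (metis card_0_eq empty_iff less_one not_le)
    hence "card W' = card W" using fW c c'W by (simp add: W'_def)
    hence W'c: "W' \<in> committees C k" using Wc cC by (auto simp: committees_def W'_def)
    have finPs: "finite Ps" using part fin by (metis finite_UnionD partition_onD1)
    have fv: "finite (voters A)" using prof by (simp add: is_profile_def)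
    have disj: "disjoint Ps" using part by (simp add: partition_on_def)
    have "thiele_score real A W' = (\<Sum>P\<in>Ps. real (party_support A P) * real (card (P \<inter> W')))"
      by (rule score_parts[OF fv finPs bal])
    also have "\<dots> = (\<Sum>P\<in>Ps. real (party_support A P) * real (card (P \<inter> W))
        + ((if P = Qj then real (party_support A P) else 0) - (if P = Qi then real (party_support A P) else 0)))"
      unfolding W'_def
      by (intro sum.cong refl, subst card_change[OF fW c(2) c'W c(1) c' neq _ Qi Qj disj]) (auto simp: algebra_simps)
    also have "\<dots> = thiele_score real A W + real (party_support A Qj) - real (party_support A Qi)"
      using finPs Qi Qj by (simp add: sum.distrib sum_subtractf score_parts[OF fv finPs bal])
    finally have "thiele_score real A W' > thiele_score real A W" using lt by simp
    thus False using Wmax W'c by force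
  qed
qed



lemma (in setting) outcome_eq:
  assumes "is_profile C A"
  shows "thiele_outcome C k s A = thiele_outcome C k real A"
proof -
  have sc: "thiele_score s A W = s 1 * thiele_score real A W" if "W \<in> committees C k" for W
  proof -
    have fW: "finite W" using that fin finite_subset by (auto simp: committees_def)
    have "s (card (A i \<inter> W)) = s 1 * real (card (A i \<inter> W))" for i
    proof -
      have "card (A i \<inter> W) \<le> card W" using fW by (intro card_mono) auto
      hence "card (A i \<inter> W) \<le> k" using that by (simp add: committees_def)
      thus ?thesis using linear by (simp add: mult.commute)
    qed
    thus ?thesis unfolding thiele_score_def by (simp add: sum_distrib_left)
  qed
  show ?thesis unfolding thiele_outcome_def using sc s1_pos by auto
qed

theorem proposition1:
  fixes C :: "'a set" and k :: nat
  assumes "finite C" and "card C \<ge> 2" and "1 \<le> k" and "k < card C"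
  shows "thiele_rule C k (AV C k) \<and> excellence C (AV C k) \<and>
    (\<forall>f. thiele_rule C k f \<and> excellence C f \<longrightarrow>
        (\<forall>A. is_profile C A \<longrightarrow> f A = AV C k A))"
proof (intro conjI allI impI)
  show "thiele_rule C k (AV C k)"
    unfolding thiele_rule_def is_abc_rule_def
  proof (intro conjI allI impI)
    fix A assume "is_profile C A"
    show "AV C k A \<noteq> {}" unfolding AV_def using outcome_nonempty[of C k real A] assms by simp
    show "AV C k A \<subseteq> committees C k" unfolding AV_def thiele_outcome_def by auto
  next
    show "\<exists>s. s 0 = 0 \<and> (\<forall>x y. x \<le> y \<longrightarrow> y \<le> k \<longrightarrow> s x \<le> s y) \<and>
          (\<forall>A. is_profile C A \<longrightarrow> AV C k A = thiele_outcome C k s A)"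
      by (rule exI[of _ real]) (simp add: AV_def)
  qed
  show "excellence C (AV C k)" using AV_excellence assms(1) .
next
  fix f A
  assume fe: "thiele_rule C k f \<and> excellence C f" and pA: "is_profile C A"
  then obtain s :: "nat \<Rightarrow> real" where s: "s 0 = 0" "\<forall>x y. x \<le> y \<longrightarrow> y \<le> k \<longrightarrow> s x \<le> s y"
    "\<forall>A. is_profile C A \<longrightarrow> f A = thiele_outcome C k s A"
    unfolding thiele_rule_def by blast
  interpret setting C k s
  proof
    show "finite C" "1 \<le> k" "k < card C" "s 0 = 0" using assms s by auto
    show "\<And>x y. x \<le> y \<Longrightarrow> y \<le> k \<Longrightarrow> s x \<le> s y" using s by auto
    fix A P W Pi Pj
    assume h: "party_list_with C A P" "W \<in> thiele_outcome C k s A" "Pi \<in> P" "Pj \<in> P"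
      "party_support A Pi < party_support A Pj" "Pi \<subseteq> W"
    have "is_profile C A" using h(1) by (simp add: party_list_with_def)
    hence "W \<in> f A" using h(2) s(3) by simp
    thus "Pj \<subseteq> W" using fe h unfolding excellence_def by blast
  qed
  show "f A = AV C k A" using s(3) pA outcome_eq[OF pA] by (simp add: AV_def)
qed

end
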